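(* Assume the setting in the context, with $0<\lambda<\eta<1$. Then $\lim_{k\to\infty}\|\nabla f(\theta_k)\|=0$.
   Context: Let $g:\mathbb{R}^n\to\mathbb{R}$, $h:\mathbb{R}^n\times\mathbb{R}^d\to\mathbb{R}$ satisfy: (A1) $h$ is twice differentiable in $x$, for each $\theta$ there are $0<\mu(\theta)\le L(\theta)$ with $\mu(\theta)I\preceq\nabla_x^2h(x,\theta)\preceq L(\theta)I$ for all $x$, and $\nabla_xh,\nabla^2_xh$ are continuous in $\theta$; (A2) $\nabla_x^2h$ is $L_H$-Lipschitz in $x$ and $\nabla^2_{x\theta}h$ is $L_J$-Lipschitz in $x$, uniformly in $\theta$. Let $\hat{x}(\theta)=\arg\min_xh(x,\theta)$, $f(\theta)=g(\hat{x}(\theta))$. (B) $f$ is continuously differentiable with $L_{\nabla f}$-Lipschitz gradient, $g$ continuously differentiable with $L_{\nabla g}$-Lipschitz gradient, $L_{\nabla f},L_{\nabla g}>0$, $g$ bounded below. Fix $\beta_0>0$, $0<\underline{\rho}<1<\overline{\rho}$, $\lambda<\eta$. Consider sequences $\theta_k\in\mathbb{R}^d$, $z_k\in\mathbb{R}^d\setminus\{0\}$, $\epsilon_k\ge0$, $\tilde{x}_k\in\mathbb{R}^n$ with $\|\tilde{x}_k-\hat{x}(\theta_k)\|\le\epsilon_k$, $\alpha_k,\beta_k>0$, with $\theta_{k+1}=\theta_k-\alpha_kz_k$ and $\|z_k-\nabla f(\theta_k)\|\le(1-\eta)\|z_k\|$ for all $k$. Set $w_k=\|\nabla g(\tilde{x}_k)\|+\|\nabla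 g(\tilde{x}_{k+1})\|$, $\bar{\epsilon}_k=\max\{\epsilon_k,\epsilon_{k+1}\}$, $\hat{s}_k=\sqrt{(\eta-\lambda)^2-4L_{\nabla f}(w_k\bar{\epsilon}_k+L_{\nabla g}\bar{\epsilon}_k^2)/\|z_k\|^2}$ (assumed real), $\underline{\alpha}_k=(\eta-\lambda-\hat{s}_k)/L_{\nabla f}$, $\overline{\alpha}_k=(\eta-\lambda+\hat{s}_k)/L_{\nabla f}$. Assume for every $k$: $\alpha_k=\underline{\rho}^{i_k}\beta_k$ where $i_k$ is the smallest nonnegative integer with $\underline{\rho}^{i_k}\beta_k\in[\underline{\alpha}_k,\overline{\alpha}_k]$; if $i_k>0$ then $\alpha_k>\underline{\rho}\,\overline{\alpha}_k$; and $\beta_{k+1}=\overline{\rho}\alpha_k$. *)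

theory Defs
  imports "HOL-Analysis.Analysis"
begin

definition xhat :: "(real^'n \<Rightarrow> real^'d \<Rightarrow> real) \<Rightarrow> real^'d \<Rightarrow> real^'n" where
  "xhat h \<theta> = (ARG_MIN (\<lambda>x. h x \<theta>) x. True)"

definition shat_rad :: "real \<Rightarrow> real \<Rightarrow> real \<Rightarrow> real \<Rightarrow> real \<Rightarrow> real \<Rightarrow> real \<Rightarrow> real" where
  "shat_rad \<eta> lam Lf Lg w eb zn = (\<eta> - lam)^2 - 4 * Lf * (w * eb + Lg * eb^2) / zn^2"

definition shat :: "real \<Rightarrow> real \<Rightarrow> real \<Rightarrow> real \<Rightarrow> real \<Rightarrow> real \<Rightarrow> real \<Rightarrow> real" where
  "shat \<eta> lam Lf Lg w eb zn = sqrt (shat_rad \<eta> lam Lf Lg w eb zn)"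

definition alpha_low :: "real \<Rightarrow> real \<Rightarrow> real \<Rightarrow> real \<Rightarrow> real \<Rightarrow> real \<Rightarrow> real \<Rightarrow> real" where
  "alpha_low \<eta> lam Lf Lg w eb zn = (\<eta> - lam - shat \<eta> lam Lf Lg w eb zn) / Lf"

definition alpha_up :: "real \<Rightarrow> real \<Rightarrow> real \<Rightarrow> real \<Rightarrow> real \<Rightarrow> real \<Rightarrow> real \<Rightarrow> real" where
  "alpha_up \<eta> lam Lf Lg w eb zn = (\<eta> - lam + shat \<eta> lam Lf Lg w eb zn) / Lf"

end

theory Submission
  imports Defs
begin

lemma descent:
  fixes F :: "'a::real_inner \<Rightarrow> real"
  assumes D: "\<And>p. (F has_derivative (\<lambda>u. G p \<bullet> u)) (at p)"
    and Lip: "\<And>a b. norm (G a - G b) \<le> L * norm (a - b)" and L: "L \<ge> 0"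
  shows "F y \<le> F x + G x \<bullet> (y - x) + L / 2 * (norm (y - x))^2"
proof -
  define d where "d = y - x"
  define \<psi> where "\<psi> t = F (x + t *\<^sub>R d) - t * (G x \<bullet> d) - L / 2 * t^2 * (norm d)^2" for t
  have der: "(\<psi> has_real_derivative (G (x + t *\<^sub>R d) \<bullet> d - G x \<bullet> d - L * t * (norm d)^2)) (at t)" for t
  proof -
    have l: "((\<lambda>t. x + t *\<^sub>R d) has_derivative (\<lambda>s. s *\<^sub>R d)) (at t)"
      by (auto intro!: derivative_eq_intros)
    have "((\<lambda>t. F (x + t *\<^sub>R d)) has_derivative (\<lambda>s. G (x + t *\<^sub>R d) \<bullet> (s *\<^sub>R d))) (at t)"
      using has_derivative_compose[OF l D] by simp
    moreover have "(\<lambda>s. G (x + t *\<^sub>R d) \<bullet> (s *\<^sub>R d)) = (*) (G (x + t *\<^sub>R d) \<bullet> d)"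
      by (rule ext) simp
    ultimately have "((\<lambda>t. F (x + t *\<^sub>R d)) has_real_derivative (G (x + t *\<^sub>R d) \<bullet> d)) (at t)"
      unfolding has_field_derivative_def by simp
    then show ?thesis unfolding \<psi>_def
      by (auto intro!: derivative_eq_intros)
  qed
  have "\<psi> 1 \<le> \<psi> 0"
  proof (rule DERIV_nonpos_imp_nonincreasing[of 0 1 \<psi>])
    fix t :: real assume t: "0 \<le> t" "t \<le> 1"
    have "G (x + t *\<^sub>R d) \<bullet> d - G x \<bullet> d = (G (x + t *\<^sub>R d) - G x) \<bullet> d"
      by (simp add: inner_diff_left)
    also have "\<dots> \<le> norm (G (x + t *\<^sub>R d) - G x) * norm d" by (rule norm_cauchy_schwarz)
    also have "\<dots> \<le> L * norm (t *\<^sub>R d) * norm d"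
      using Lip[of "x + t *\<^sub>R d" x] by (simp add: mult_right_mono)
    also have "\<dots> = L * t * (norm d)^2" using t by (simp add: power2_eq_square)
    finally show "\<exists>y. (\<psi> has_real_derivative y) (at t) \<and> y \<le> 0" using der[of t] by force
  qed simp
  then show ?thesis unfolding \<psi>_def d_def by simp
qed

theorem corollary3p16:
  fixes g :: "real^'n \<Rightarrow> real"
    and h :: "real^'n \<Rightarrow> real^'d \<Rightarrow> real"
    and Gh :: "real^'n \<Rightarrow> real^'d \<Rightarrow> real^'n"
    and Hh :: "real^'n \<Rightarrow> real^'d \<Rightarrow> real^'n^'n"
    and Jh :: "real^'n \<Rightarrow> real^'d \<Rightarrow> real^'d^'n"
    and \<mu> Lh :: "real^'d \<Rightarrow> real"
    and LH LJ Lf Lg :: real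
    and gradf :: "real^'d \<Rightarrow> real^'d"
    and gradg :: "real^'n \<Rightarrow> real^'n"
    and \<beta>0 \<rho>l \<rho>h lam \<eta> :: real
    and \<theta> z :: "nat \<Rightarrow> real^'d"
    and \<epsilon> \<alpha> \<beta> :: "nat \<Rightarrow> real"
    and xt :: "nat \<Rightarrow> real^'n"
  assumes A1_grad: "\<And>x t. ((\<lambda>y. h y t) has_derivative (\<lambda>v. Gh x t \<bullet> v)) (at x)"
    and A1_hess: "\<And>x t. ((\<lambda>y. Gh y t) has_derivative (\<lambda>v. Hh x t *v v)) (at x)"
    and A1_mu: "\<And>t. 0 < \<mu> t \<and> \<mu> t \<le> Lh t"
    and A1_bounds: "\<And>x t v. \<mu> t * (v \<bullet> v) \<le> v \<bullet> (Hh x t *v v) \<and> v \<bullet> (Hh x t *v v) \<le> Lh t * (v \<bullet> v)"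
    and A1_cont_grad: "\<And>x. continuous_on UNIV (\<lambda>t. Gh x t)"
    and A1_cont_hess: "\<And>x. continuous_on UNIV (\<lambda>t. Hh x t)"
    and A2_hess_lip: "\<And>x y t. onorm (\<lambda>v. (Hh x t - Hh y t) *v v) \<le> LH * norm (x - y)"
    and A2_mixed: "\<And>x t. ((\<lambda>t'. Gh x t') has_derivative (\<lambda>u. Jh x t *v u)) (at t)"
    and A2_mixed_lip: "\<And>x y t. onorm (\<lambda>u. (Jh x t - Jh y t) *v u) \<le> LJ * norm (x - y)"
    and B_f: "\<And>t. ((\<lambda>t'. g (xhat h t')) has_derivative (\<lambda>u. gradf t \<bullet> u)) (at t)"
    and B_f_cont: "continuous_on UNIV gradf"
    and B_f_lip: "\<And>a b. norm (gradf a - gradf b) \<le> Lf * norm (a - b)"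
    and B_g: "\<And>x. (g has_derivative (\<lambda>v. gradg x \<bullet> v)) (at x)"
    and B_g_cont: "continuous_on UNIV gradg"
    and B_g_lip: "\<And>a b. norm (gradg a - gradg b) \<le> Lg * norm (a - b)"
    and B_pos: "Lf > 0" "Lg > 0"
    and B_bdd: "bdd_below (range g)"
    and par: "\<beta>0 > 0" "0 < \<rho>l" "\<rho>l < 1" "1 < \<rho>h" "0 < lam" "lam < \<eta>" "\<eta> < 1"
    and seq: "\<And>k. z k \<noteq> 0" "\<And>k. \<epsilon> k \<ge> 0"
      "\<And>k. norm (xt k - xhat h (\<theta> k)) \<le> \<epsilon> k"
      "\<And>k. \<alpha> k > 0" "\<And>k. \<beta> k > 0"
      "\<And>k. \<theta> (Suc k) = \<theta> k - \<alpha> k *\<^sub>R z k"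
      "\<And>k. norm (z k - gradf (\<theta> k)) \<le> (1 - \<eta>) * norm (z k)"
    and real_rad: "\<And>k. shat_rad \<eta> lam Lf Lg
        (norm (gradg (xt k)) + norm (gradg (xt (Suc k)))) (max (\<epsilon> k) (\<epsilon> (Suc k))) (norm (z k)) \<ge> 0"
    and step: "\<And>k. \<exists>i::nat.
        (let w = norm (gradg (xt k)) + norm (gradg (xt (Suc k)));
             eb = max (\<epsilon> k) (\<epsilon> (Suc k));
             lo = alpha_low \<eta> lam Lf Lg w eb (norm (z k));
             up = alpha_up \<eta> lam Lf Lg w eb (norm (z k))
         in \<alpha> k = \<rho>l ^ i * \<beta> k \<and> lo \<le> \<rho>l ^ i * \<beta> k \<and> \<rho>l ^ i * \<beta> k \<le> up
            \<and> (\<forall>j<i. \<not> (lo \<le> \<rho>l ^ j * \<beta> k \<and> \<rho>l ^ j * \<beta> k \<le> up))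
            \<and> (i > 0 \<longrightarrow> \<alpha> k > \<rho>l * up))"
    and beta0: "\<beta> 0 = \<beta>0"
    and beta_next: "\<And>k. \<beta> (Suc k) = \<rho>h * \<alpha> k"
  shows "(\<lambda>k. norm (gradf (\<theta> k))) \<longlonglongrightarrow> 0"
  proof -
  define F where "F t = g (xhat h t)" for t
  have FD: "\<And>p. (F has_derivative (\<lambda>u. gradf p \<bullet> u)) (at p)"
    unfolding F_def using B_f by simp
  define W where "W k = norm (gradg (xt k)) + norm (gradg (xt (Suc k)))" for k
  define EB where "EB k = max (\<epsilon> k) (\<epsilon> (Suc k))" for k
  define UP where "UP k = alpha_up \<eta> lam Lf Lg (W k) (EB k) (norm (z k))" for k
  have stepk: "\<exists>i::nat. \<alpha> k = \<rho>l ^ i * \<beta> k \<and> \<rho>l ^ i * \<beta> k \<le> UP k \<and> (i > 0 \<longrightarrow> \<alpha> k > \<rho>l * UP k)" for k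
    using step[of k] unfolding UP_def W_def EB_def Let_def by blast
  have shat_bd: "0 \<le> shat \<eta> lam Lf Lg (W k) (EB k) (norm (z k)) \<and> shat \<eta> lam Lf Lg (W k) (EB k) (norm (z k)) \<le> \<eta> - lam" for k
  proof -
    have "W k \<ge> 0" unfolding W_def by simp
    moreover have "EB k \<ge> 0" unfolding EB_def using seq(2)[of k] by simp
    ultimately have "0 \<le> 4 * Lf * (W k * EB k + Lg * (EB k)^2) / (norm (z k))^2"
      using B_pos by simp
    then have "shat_rad \<eta> lam Lf Lg (W k) (EB k) (norm (z k)) \<le> (\<eta> - lam)^2"
      unfolding shat_rad_def by simp
    then have "sqrt (shat_rad \<eta> lam Lf Lg (W k) (EB k) (norm (z k))) \<le> sqrt ((\<eta> - lam)^2)"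
      by (rule real_sqrt_le_mono)
    then show ?thesis unfolding shat_def using par real_rad[of k] unfolding W_def EB_def by simp
  qed
  have UP_lo: "UP k \<ge> (\<eta> - lam) / Lf" and UP_hi: "UP k \<le> 2 * (\<eta> - lam) / Lf" for k
    using shat_bd[of k] B_pos unfolding UP_def alpha_up_def by (auto simp: divide_right_mono)
  have alpha_hi: "\<alpha> k \<le> 2 * (\<eta> - lam) / Lf" for k
    using stepk[of k] UP_hi[of k] by force
  define m where "m = min \<beta>0 (\<rho>l * ((\<eta> - lam) / Lf))"
  have mpos: "m > 0" unfolding m_def using par B_pos by simp
  have alpha_lo: "\<alpha> k \<ge> m" for k
  proof (induction k)
    case 0
    obtain i where i: "\<alpha> 0 = \<rho>l ^ i * \<beta> 0" "i > 0 \<longrightarrow> \<alpha> 0 > \<rho>l * UP 0" using stepk[of 0] by blast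
    show ?case
    proof (cases "i = 0")
      case True then show ?thesis using i beta0 unfolding m_def by simp
    next
      case False
      then have "\<alpha> 0 > \<rho>l * UP 0" using i by simp
      moreover have "\<rho>l * UP 0 \<ge> \<rho>l * ((\<eta> - lam) / Lf)" using mult_left_mono[OF UP_lo[of 0], of \<rho>l] par by simp
      ultimately show ?thesis unfolding m_def by linarith
    qed
  next
    case (Suc k)
    obtain i where i: "\<alpha> (Suc k) = \<rho>l ^ i * \<beta> (Suc k)" "i > 0 \<longrightarrow> \<alpha> (Suc k) > \<rho>l * UP (Suc k)"
      using stepk[of "Suc k"] by blast
    show ?case
    proof (cases "i = 0")
      case True
      then have "\<alpha> (Suc k) = \<rho>h * \<alpha> k" using i beta_next by simp
      moreover have "\<rho>h * \<alpha> k \<ge> \<alpha> k" using par seq(4)[of k] by simp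
      ultimately show ?thesis using Suc by linarith
    next
      case False
      then have "\<alpha> (Suc k) > \<rho>l * UP (Suc k)" using i by simp
      moreover have "\<rho>l * UP (Suc k) \<ge> \<rho>l * ((\<eta> - lam) / Lf)" using mult_left_mono[OF UP_lo[of "Suc k"], of \<rho>l] par by simp
      ultimately show ?thesis unfolding m_def by linarith
    qed
  qed
  have inner_bd: "gradf (\<theta> k) \<bullet> z k \<ge> \<eta> * (norm (z k))^2" for k
  proof -
    have "(z k - gradf (\<theta> k)) \<bullet> z k \<le> norm (z k - gradf (\<theta> k)) * norm (z k)" by (rule norm_cauchy_schwarz)
    also have "\<dots> \<le> (1 - \<eta>) * norm (z k) * norm (z k)" using seq(7)[of k] by (simp add: mult_right_mono)
    finally have "(z k - gradf (\<theta> k)) \<bullet> z k \<le> (1 - \<eta>) * (norm (z k))^2" by (simp add: power2_eq_square)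
    moreover have "(z k - gradf (\<theta> k)) \<bullet> z k = (norm (z k))^2 - gradf (\<theta> k) \<bullet> z k"
      by (simp add: inner_diff_left power2_norm_eq_inner)
    ultimately show ?thesis by (simp add: algebra_simps)
  qed
  have dec: "F (\<theta> (Suc k)) \<le> F (\<theta> k) - lam * m * (norm (z k))^2" for k
  proof -
    have "F (\<theta> (Suc k)) \<le> F (\<theta> k) + gradf (\<theta> k) \<bullet> (\<theta> (Suc k) - \<theta> k) + Lf / 2 * (norm (\<theta> (Suc k) - \<theta> k))^2"
      by (rule descent[OF FD B_f_lip]) (use B_pos in simp)
    also have "\<dots> = F (\<theta> k) - \<alpha> k * (gradf (\<theta> k) \<bullet> z k) + Lf / 2 * (\<alpha> k)^2 * (norm (z k))^2"
      using seq(6)[of k] seq(4)[of k] by (simp add: power_mult_distrib)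
    also have "\<dots> \<le> F (\<theta> k) - \<alpha> k * (\<eta> * (norm (z k))^2) + Lf / 2 * (\<alpha> k)^2 * (norm (z k))^2"
      using inner_bd[of k] seq(4)[of k] by (simp add: mult_left_mono)
    also have "\<dots> \<le> F (\<theta> k) - lam * \<alpha> k * (norm (z k))^2"
    proof -
      have "Lf / 2 * \<alpha> k \<le> \<eta> - lam" using alpha_hi[of k] B_pos by (simp add: field_simps)
      then have "Lf / 2 * \<alpha> k * (\<alpha> k * (norm (z k))^2) \<le> (\<eta> - lam) * (\<alpha> k * (norm (z k))^2)"
        using seq(4)[of k] by (intro mult_right_mono) auto
      then show ?thesis by (simp add: algebra_simps power2_eq_square)
    qed
    also have "\<dots> \<le> F (\<theta> k) - lam * m * (norm (z k))^2"
      using alpha_lo[of k] par by (simp add: mult_right_mono)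
    finally show ?thesis .
  qed
  obtain B where B: "\<And>x. B \<le> g x" using B_bdd by (auto simp: bdd_below_def)
  define c where "c = lam * m"
  have cpos: "c > 0" unfolding c_def using mpos par by simp
  have psum: "(\<Sum>k<n. c * (norm (z k))^2) \<le> F (\<theta> 0) - F (\<theta> n)" for n
  proof (induction n)
    case (Suc n) then show ?case using dec[of n] unfolding c_def by simp
  qed simp
  have "(\<Sum>k\<le>n. c * (norm (z k))^2) \<le> F (\<theta> 0) - B" for n
    using psum[of "Suc n"] B[of "xhat h (\<theta> (Suc n))"] unfolding F_def lessThan_Suc_atMost by simp
  then have "summable (\<lambda>k. c * (norm (z k))^2)"
    by (intro bounded_imp_summable) (use cpos in auto)
  then have "(\<lambda>k. c * (norm (z k))^2) \<longlonglongrightarrow> 0" by (rule summable_LIMSEQ_zero)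
  then have "(\<lambda>k. (1 / c) * (c * (norm (z k))^2)) \<longlonglongrightarrow> (1/c) * 0" by (intro tendsto_mult) auto
  then have "(\<lambda>k. (norm (z k))^2) \<longlonglongrightarrow> 0" using cpos by simp
  then have "(\<lambda>k. sqrt ((norm (z k))^2)) \<longlonglongrightarrow> sqrt 0" by (rule tendsto_real_sqrt)
  then have zt: "(\<lambda>k. norm (z k)) \<longlonglongrightarrow> 0" by simp
  have "(\<lambda>k. 2 * norm (z k)) \<longlonglongrightarrow> 2 * 0" by (intro tendsto_mult zt) auto
  then have zt2: "(\<lambda>k. 2 * norm (z k)) \<longlonglongrightarrow> 0" by simp
  have ub: "norm (gradf (\<theta> k)) \<le> 2 * norm (z k)" for k
  proof -
    have "norm (gradf (\<theta> k)) \<le> norm (z k) + norm (z k - gradf (\<theta> k))"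
      by (metis add.commute diff_add_cancel norm_triangle_ineq4 norm_minus_commute order_trans norm_triangle_sub)
    then show ?thesis using seq(7)[of k] par by (smt (verit) mult_right_mono norm_ge_zero mult_left_le_one_le)
  qed
  show ?thesis
    by (rule tendsto_sandwich[OF _ _ tendsto_const zt2]) (auto intro!: always_eventually ub)
qed


end
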